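(* Let $X,Y$ be real Banach spaces and let $H$ be a closed subspace of $L(X,Y)$ with $X^*\otimes Y\subseteq H$ such that $H$ has octahedral norm. Assume that the norm of $X^*$ is non-rough. Then $Y$ has octahedral norm.
   Context: The norm of a Banach space $Z$ is octahedral if for every finite-dimensional subspace $E$ and $\varepsilon>0$ there is $y\in S_Z$ with $\|x+\lambda y\|\ge(1-\varepsilon)(\|x\|+|\lambda|)$ for all $x\in E$, scalars $\lambda$. For $u\in S_Z$, the roughness of $Z$ at $u$ is $\eta(Z,u)=\limsup_{\|h\|\to0}\frac{\|u+h\|+\|u-h\|-2}{\|h\|}$. $Z$ is $\varepsilon$-rough if $\eta(Z,u)\ge\varepsilon$ for every $u\in S_Z$; $Z$ (its norm) is rough if it is $\varepsilon$-rough for some $\varepsilon>0$, and non-rough otherwise. $X^*\otimes Y$ is the space of finite-rank operators spanned by $x\mapsto x^*(x)y$. *)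

theory Defs
  imports "HOL-Analysis.Analysis" "HOL-Library.Liminf_Limsup"
begin

text \<open>Octahedral norm of a (closed) subspace S of a real normed space, with the
restricted norm. Finite-dimensional subspaces of S are spans of finite subsets of S.\<close>
definition octahedral_on :: "'a::real_normed_vector set \<Rightarrow> bool" where
  "octahedral_on S \<longleftrightarrow>
     (\<forall>E \<epsilon>. (\<exists>B. finite B \<and> B \<subseteq> S \<and> E = span B) \<and> \<epsilon> > 0 \<longrightarrow>
        (\<exists>y\<in>S. norm y = 1 \<and>
           (\<forall>x\<in>E. \<forall>c::real. norm (x + c *\<^sub>R y) \<ge> (1 - \<epsilon>) * (norm x + \<bar>c\<bar>))))"

abbreviation octahedral :: "'a::real_normed_vector itself \<Rightarrow> bool" where
  "octahedral _ \<equiv> octahedral_on (UNIV :: 'a set)"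

definition roughness :: "'a::real_normed_vector \<Rightarrow> ereal" where
  "roughness u = Limsup (at 0) (\<lambda>h. ereal ((norm (u + h) + norm (u - h) - 2) / norm h))"

definition eps_rough :: "'a::real_normed_vector itself \<Rightarrow> real \<Rightarrow> bool" where
  "eps_rough _ \<epsilon> \<longleftrightarrow> (\<forall>u::'a. norm u = 1 \<longrightarrow> roughness u \<ge> ereal \<epsilon>)"

definition rough :: "'a::real_normed_vector itself \<Rightarrow> bool" where
  "rough t \<longleftrightarrow> (\<exists>\<epsilon>>0. eps_rough t \<epsilon>)"

text \<open>Rank-one operator x \<mapsto> x*(x) y, and X* \<otimes> Y as their linear span.\<close>
definition rank_one :: "('a::real_normed_vector \<Rightarrow>\<^sub>L real) \<Rightarrow> 'b::real_normed_vector \<Rightarrow> ('a \<Rightarrow>\<^sub>L 'b)" where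
  "rank_one f y = blinfun_scaleR_left y o\<^sub>L f"

lemma rank_one_apply: "blinfun_apply (rank_one f y) x = blinfun_apply f x *\<^sub>R y"
  by (simp add: rank_one_def)

definition tensor_dual :: "('a::real_normed_vector \<Rightarrow>\<^sub>L 'b::real_normed_vector) set" where
  "tensor_dual = span {rank_one f y | f y. True}"

end

theory Submission
  imports Defs
begin


definition HBset :: "'a::real_normed_vector \<Rightarrow> ('a \<times> real) set set" where
 "HBset v = {G. (v, norm v) \<in> G \<and> (\<forall>x a y b. (x,a)\<in>G \<longrightarrow> (y,b)\<in>G \<longrightarrow> (x+y,a+b)\<in>G)
    \<and> (\<forall>x a c. (x,a)\<in>G \<longrightarrow> (c *\<^sub>R x, c*a)\<in>G) \<and> (\<forall>x a. (x,a)\<in>G \<longrightarrow> a \<le> norm x)}"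

lemma HB_chain:
  fixes v :: "'a::real_normed_vector"
  assumes C: "C \<in> chains (HBset v)"
  shows "\<exists>U\<in>HBset v. \<forall>X\<in>C. X \<subseteq> U"
proof (cases "C = {}")
  case True
  let ?G = "{(c *\<^sub>R v, c * norm v) |c. True}"
  have "?G \<in> HBset v"
    unfolding HBset_def
  proof (rule CollectI, intro conjI allI impI)
    have "(v, norm v) = (1 *\<^sub>R v, 1 * norm v)" by simp
    then show "(v, norm v) \<in> ?G" by blast
  next
    fix x a y b assume "(x,a) \<in> ?G" "(y,b) \<in> ?G"
    then obtain c d where "x = c *\<^sub>R v" "a = c * norm v" "y = d *\<^sub>R v" "b = d * norm v" by auto
    then show "(x+y, a+b) \<in> ?G"
      by (auto intro!: exI[of _ "c+d"] simp: scaleR_add_left distrib_right)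
  next
    fix x a c assume "(x,a) \<in> ?G"
    then obtain d where "x = d *\<^sub>R v" "a = d * norm v" by auto
    then show "(c *\<^sub>R x, c*a) \<in> ?G" by (auto intro!: exI[of _ "c*d"])
  next
    fix x a assume "(x,a) \<in> ?G"
    then obtain d where "x = d *\<^sub>R v" "a = d * norm v" by auto
    then show "a \<le> norm x" by (simp add: mult_right_mono)
  qed
  then show ?thesis using True by blast
next
  case False
  have sub: "C \<subseteq> HBset v" and ch: "\<And>A B. A \<in> C \<Longrightarrow> B \<in> C \<Longrightarrow> A \<subseteq> B \<or> B \<subseteq> A"
    using C by (auto simp: chains_def chain_subset_def)
  have "\<Union>C \<in> HBset v"
    unfolding HBset_def
  proof (rule CollectI, intro conjI allI impI)
    show "(v, norm v) \<in> \<Union>C" using False sub by (auto simp: HBset_def)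
  next
    fix x a y b assume "(x,a) \<in> \<Union>C" "(y,b) \<in> \<Union>C"
    then obtain A B where AB: "A \<in> C" "B \<in> C" "(x,a) \<in> A" "(y,b) \<in> B" by auto
    from ch[OF AB(1,2)] show "(x+y, a+b) \<in> \<Union>C"
    proof
      assume "A \<subseteq> B"
      then have "(x,a) \<in> B" using AB by auto
      moreover have "B \<in> HBset v" using AB sub by auto
      ultimately have "(x+y,a+b) \<in> B" using AB unfolding HBset_def by blast
      then show ?thesis using AB by auto
    next
      assume "B \<subseteq> A"
      then have "(y,b) \<in> A" using AB by auto
      moreover have "A \<in> HBset v" using AB sub by auto
      ultimately have "(x+y,a+b) \<in> A" using AB unfolding HBset_def by blast
      then show ?thesis using AB by auto
    qed
  next
    fix x a c assume "(x,a) \<in> \<Union>C"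
    then obtain A where "A \<in> C" "(x,a) \<in> A" by auto
    moreover have "A \<in> HBset v" using \<open>A \<in> C\<close> sub by auto
    ultimately have "(c *\<^sub>R x, c*a) \<in> A" unfolding HBset_def by blast
    then show "(c *\<^sub>R x, c*a) \<in> \<Union>C" using \<open>A \<in> C\<close> by blast
  next
    fix x a assume "(x,a) \<in> \<Union>C"
    then obtain A where "A \<in> C" "(x,a) \<in> A" by auto
    then show "a \<le> norm x" using sub by (auto simp: HBset_def)
  qed
  then show ?thesis by blast
qed

lemma HB_extend:
  fixes v :: "'a::real_normed_vector"
  assumes M: "M \<in> HBset v" and z: "\<forall>a. (z,a) \<notin> M"
  shows "\<exists>M'\<in>HBset v. M \<subseteq> M' \<and> M' \<noteq> M"
proof -
  have add: "\<And>x a y b. (x,a)\<in>M \<Longrightarrow> (y,b)\<in>M \<Longrightarrow> (x+y,a+b)\<in>M"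
    and scl: "\<And>x a c. (x,a)\<in>M \<Longrightarrow> (c *\<^sub>R x, c*a)\<in>M"
    and dom: "\<And>x a. (x,a)\<in>M \<Longrightarrow> a \<le> norm x"
    and vM: "(v, norm v) \<in> M"
    using M by (auto simp: HBset_def)
  have zero: "(0,0) \<in> M" using scl[OF vM, of 0] by simp
  define S where "S = {a - norm (s - z) |s a. (s,a) \<in> M}"
  have key: "\<And>s1 a1 s2 a2. (s1,a1)\<in>M \<Longrightarrow> (s2,a2)\<in>M \<Longrightarrow> a1 - norm (s1 - z) \<le> norm (s2 + z) - a2"
  proof -
    fix s1 a1 s2 a2 assume "(s1,a1)\<in>M" "(s2,a2)\<in>M"
    then have "a1 + a2 \<le> norm (s1 + s2)" using add dom by blast
    also have "norm (s1 + s2) \<le> norm (s1 - z) + norm (s2 + z)"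
      using norm_triangle_ineq[of "s1 - z" "s2 + z"] by simp
    finally show "a1 - norm (s1 - z) \<le> norm (s2 + z) - a2" by simp
  qed
  define c where "c = Sup S"
  have Sne: "S \<noteq> {}" using zero by (auto simp: S_def)
  have Sbdd: "bdd_above S" unfolding S_def bdd_above_def
    using key[OF _ zero] by fastforce
  have c_ge: "\<And>s a. (s,a)\<in>M \<Longrightarrow> a - norm (s - z) \<le> c"
    unfolding c_def by (rule cSup_upper[OF _ Sbdd]) (auto simp: S_def)
  have c_le: "\<And>s a. (s,a)\<in>M \<Longrightarrow> c \<le> norm (s + z) - a"
    unfolding c_def by (rule cSup_least[OF Sne]) (auto simp: S_def intro: key)
  define M' where "M' = {(s + t *\<^sub>R z, a + t * c) |s a t. (s,a) \<in> M}"
  have "M' \<in> HBset v"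
    unfolding HBset_def
  proof (rule CollectI, intro conjI allI impI)
    have "(v, norm v) = (v + 0 *\<^sub>R z, norm v + 0 * c)" by simp
    then show "(v, norm v) \<in> M'" unfolding M'_def using vM by blast
  next
    fix x a y b assume "(x,a) \<in> M'" "(y,b) \<in> M'"
    then obtain s1 a1 t1 s2 a2 t2 where h: "x = s1 + t1 *\<^sub>R z" "a = a1 + t1 * c" "(s1,a1)\<in>M"
      "y = s2 + t2 *\<^sub>R z" "b = a2 + t2 * c" "(s2,a2)\<in>M" unfolding M'_def by blast
    have "(s1+s2, a1+a2) \<in> M" using add h by blast
    moreover have "x + y = (s1+s2) + (t1+t2) *\<^sub>R z" "a + b = (a1+a2) + (t1+t2)*c"
      using h by (auto simp: algebra_simps)
    ultimately show "(x+y, a+b) \<in> M'" unfolding M'_def by blast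
  next
    fix x a d assume "(x,a) \<in> M'"
    then obtain s1 a1 t1 where h: "x = s1 + t1 *\<^sub>R z" "a = a1 + t1 * c" "(s1,a1)\<in>M"
      unfolding M'_def by blast
    have "(d *\<^sub>R s1, d*a1) \<in> M" using scl h by blast
    moreover have "d *\<^sub>R x = d *\<^sub>R s1 + (d*t1) *\<^sub>R z" "d * a = d*a1 + (d*t1)*c"
      using h by (auto simp: algebra_simps)
    ultimately show "(d *\<^sub>R x, d*a) \<in> M'" unfolding M'_def by blast
  next
    fix x a assume "(x,a) \<in> M'"
    then obtain s a1 t where h: "x = s + t *\<^sub>R z" "a = a1 + t * c" "(s,a1)\<in>M"
      unfolding M'_def by blast
    consider "t = 0" | "t > 0" | "t < 0" by linarith
    then show "a \<le> norm x"
    proof cases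
      case 1 then show ?thesis using h dom by simp
    next
      case 2
      have "((1/t) *\<^sub>R s, (1/t)*a1) \<in> M" using scl h by blast
      from c_le[OF this] have "c \<le> norm ((1/t) *\<^sub>R s + z) - (1/t) * a1" .
      also have "(1/t) *\<^sub>R s + z = (1/t) *\<^sub>R (s + t *\<^sub>R z)" using 2 by (simp add: algebra_simps)
      finally have "t * c \<le> t * ((1/t) * norm (s + t *\<^sub>R z) - (1/t) * a1)"
        using 2 by (simp add: mult_left_mono)
      then have "t * c \<le> norm (s + t *\<^sub>R z) - a1" using 2 by (simp add: algebra_simps)
      then show ?thesis using h by simp
    next
      case 3
      define r where "r = - t"
      have r: "r > 0" using 3 r_def by simp
      have "((1/r) *\<^sub>R s, (1/r)*a1) \<in> M" using scl h by blast
      from c_ge[OF this] have "(1/r) * a1 - norm ((1/r) *\<^sub>R s - z) \<le> c" .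
      moreover have "(1/r) *\<^sub>R s - z = (1/r) *\<^sub>R (s + t *\<^sub>R z)" using r by (simp add: r_def algebra_simps)
      ultimately have "(1/r) * a1 - (1/r) * norm (s + t *\<^sub>R z) \<le> c" using r by simp
      then have "r * ((1/r) * a1 - (1/r) * norm (s + t *\<^sub>R z)) \<le> r * c" using r by (simp add: mult_left_mono)
      then have "a1 - norm (s + t *\<^sub>R z) \<le> r * c" using r by (simp add: algebra_simps)
      then show ?thesis using h by (simp add: r_def)
    qed
  qed
  moreover have "M \<subseteq> M'"
  proof
    fix p assume "p \<in> M"
    moreover obtain s a where "p = (s,a)" by force
    moreover have "(s,a) = (s + 0 *\<^sub>R z, a + 0 * c)" by simp
    ultimately show "p \<in> M'" unfolding M'_def by blast
  qed
  moreover have "(z, c) = (0 + 1 *\<^sub>R z, 0 + 1 * c)" by simp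
  then have "(z, c) \<in> M'" unfolding M'_def using zero by blast
  ultimately show ?thesis using z by blast
qed

lemma hahn_banach_norm:
  fixes v :: "'a::real_normed_vector"
  shows "\<exists>g::'a \<Rightarrow>\<^sub>L real. norm g \<le> 1 \<and> blinfun_apply g v = norm v"
proof -
  obtain M where M: "M \<in> HBset v" and max: "\<forall>X\<in>HBset v. M \<subseteq> X \<longrightarrow> X = M"
    using Zorn_Lemma2[OF ballI[OF HB_chain]] by blast
  have add: "\<And>x a y b. (x,a)\<in>M \<Longrightarrow> (y,b)\<in>M \<Longrightarrow> (x+y,a+b)\<in>M"
    and scl: "\<And>x a c. (x,a)\<in>M \<Longrightarrow> (c *\<^sub>R x, c*a)\<in>M"
    and dom: "\<And>x a. (x,a)\<in>M \<Longrightarrow> a \<le> norm x"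
    and vM: "(v, norm v) \<in> M"
    using M by (auto simp: HBset_def)
  have tot: "\<And>z. \<exists>a. (z,a) \<in> M"
    using HB_extend[OF M] max by blast
  have uniq: "\<And>x a b. (x,a)\<in>M \<Longrightarrow> (x,b)\<in>M \<Longrightarrow> a = b"
  proof -
    fix x a b assume a: "(x,a)\<in>M" and b: "(x,b)\<in>M"
    have "(-1 *\<^sub>R x, -1*b) \<in> M" using scl b by blast
    then have "(x + -1 *\<^sub>R x, a + -1*b) \<in> M" using add a by blast
    then have 1: "a - b \<le> 0" using dom by fastforce
    have "(-1 *\<^sub>R x, -1*a) \<in> M" using scl a by blast
    then have "(x + -1 *\<^sub>R x, b + -1*a) \<in> M" using add b by blast
    then have 2: "b - a \<le> 0" using dom by fastforce
    from 1 2 show "a = b" by simp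
  qed
  define f where "f z = (THE a. (z,a) \<in> M)" for z
  have fM: "(z, f z) \<in> M" for z
    unfolding f_def using tot[of z] uniq by (metis theI)
  have fadd: "f (x + y) = f x + f y" for x y
    using uniq[OF fM add[OF fM fM]] by simp
  have fscl: "f (c *\<^sub>R x) = c * f x" for c x
    using uniq[OF fM scl[OF fM]] by simp
  have fle: "f x \<le> norm x" for x using dom fM by blast
  have fabs: "\<bar>f x\<bar> \<le> norm x" for x
  proof -
    have "- f x = f (-1 *\<^sub>R x)" using fscl[of "-1" x] by simp
    also have "\<dots> \<le> norm x" using fle[of "-1 *\<^sub>R x"] by simp
    finally show ?thesis using fle[of x] by linarith
  qed
  have bl: "bounded_linear f"
    by (rule bounded_linear_intro[of _ 1]) (auto simp: fadd fscl fabs)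
  have fv: "f v = norm v" using uniq[OF fM vM] .
  show ?thesis
    apply (rule exI[of _ "Blinfun f"])
    using bl fv fabs by (auto simp: bounded_linear_Blinfun_apply intro!: norm_blinfun_bound)
qed



lemma blinfun_le_norm:
  fixes \<psi> :: "'a::real_normed_vector \<Rightarrow>\<^sub>L real"
  assumes "norm x \<le> 1"
  shows "blinfun_apply \<psi> x \<le> norm \<psi>"
proof -
  have "blinfun_apply \<psi> x \<le> norm (blinfun_apply \<psi> x)" by simp
  also have "\<dots> \<le> norm \<psi> * norm x" by (rule norm_blinfun)
  also have "\<dots> \<le> norm \<psi>" using assms by (simp add: mult_left_le)
  finally show ?thesis .
qed

lemma blinfun_norm_approx:
  fixes A :: "'a::real_normed_vector \<Rightarrow>\<^sub>L 'b::real_normed_vector"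
  assumes "\<gamma> > 0"
  shows "\<exists>x. norm x \<le> 1 \<and> norm (blinfun_apply A x) > norm A - \<gamma>"
proof (rule ccontr)
  assume "\<not> ?thesis"
  then have H: "\<And>x. norm x \<le> 1 \<Longrightarrow> norm (blinfun_apply A x) \<le> norm A - \<gamma>" by force
  have "norm (0::'b) \<le> norm A - \<gamma>" using H[of 0] by simp
  then have pos: "0 \<le> norm A - \<gamma>" by simp
  have "norm (blinfun_apply A x) \<le> (norm A - \<gamma>) * norm x" for x
  proof (cases "x = 0")
    case True then show ?thesis by simp
  next
    case False
    then have nx: "norm x > 0" by simp
    have "norm (blinfun_apply A ((1/norm x) *\<^sub>R x)) \<le> norm A - \<gamma>"
      by (rule H) (use nx in simp)
    then have "(1/norm x) * norm (blinfun_apply A x) \<le> norm A - \<gamma>"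
      by (simp add: blinfun.scaleR_right)
    then show ?thesis using nx by (simp add: field_simps)
  qed
  then have "norm A \<le> norm A - \<gamma>" by (rule norm_blinfun_bound[OF pos])
  then show False using assms by simp
qed

lemma blinfun_real_approx:
  fixes \<phi> :: "'a::real_normed_vector \<Rightarrow>\<^sub>L real"
  assumes "\<gamma> > 0"
  shows "\<exists>x. norm x \<le> 1 \<and> blinfun_apply \<phi> x > norm \<phi> - \<gamma>"
proof -
  obtain x where x: "norm x \<le> 1" "norm (blinfun_apply \<phi> x) > norm \<phi> - \<gamma>"
    using blinfun_norm_approx[OF assms] by blast
  show ?thesis
  proof (cases "blinfun_apply \<phi> x \<ge> 0")
    case True then show ?thesis using x by (intro exI[of _ x]) auto
  next
    case False then show ?thesis using x
      by (intro exI[of _ "-x"]) (auto simp: blinfun.minus_right)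
  qed
qed

lemma slice:
  fixes u :: "'a::real_normed_vector \<Rightarrow>\<^sub>L real"
  assumes r: "roughness u < ereal \<eta>" and eta: "\<eta> > 0"
  shows "\<exists>\<delta>>0. \<forall>(T::'a \<Rightarrow>\<^sub>L 'b::real_normed_vector) x1 x2. norm T \<le> 1 \<longrightarrow> norm x1 \<le> 1 \<longrightarrow> norm x2 \<le> 1
     \<longrightarrow> blinfun_apply u x1 \<ge> 1 - \<delta> \<longrightarrow> blinfun_apply u x2 \<ge> 1 - \<delta>
     \<longrightarrow> norm (blinfun_apply T x1 - blinfun_apply T x2) \<le> 2 * \<eta>"
proof -
  have "eventually (\<lambda>h. ereal ((norm (u + h) + norm (u - h) - 2) / norm h) < ereal \<eta>) (at 0)"
    using Limsup_lessD[OF r[unfolded roughness_def]] .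
  then obtain d where d: "d > 0"
    and dh: "\<And>h. h \<noteq> 0 \<Longrightarrow> dist h 0 < d \<Longrightarrow> (norm (u + h) + norm (u - h) - 2) / norm h < \<eta>"
    unfolding eventually_at by auto
  define t where "t = d / 2"
  have t: "t > 0" "t < d" using d by (auto simp: t_def)
  define \<delta> where "\<delta> = \<eta> * t / 2"
  have \<delta>: "\<delta> > 0" using eta t by (simp add: \<delta>_def)
  show ?thesis
  proof (intro exI[of _ \<delta>] conjI \<delta> allI impI)
    fix T :: "'a \<Rightarrow>\<^sub>L 'b" and x1 x2
    assume nT: "norm T \<le> 1" and n1: "norm x1 \<le> 1" and n2: "norm x2 \<le> 1"
      and u1: "blinfun_apply u x1 \<ge> 1 - \<delta>" and u2: "blinfun_apply u x2 \<ge> 1 - \<delta>"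
    define D where "D = norm (blinfun_apply T x1 - blinfun_apply T x2)"
    obtain g :: "'b \<Rightarrow>\<^sub>L real" where g: "norm g \<le> 1"
      "blinfun_apply g (blinfun_apply T x1 - blinfun_apply T x2) = D"
      using hahn_banach_norm unfolding D_def by blast
    define \<phi> where "\<phi> = g o\<^sub>L T"
    have n\<phi>: "norm \<phi> \<le> 1"
    proof -
      have "norm \<phi> \<le> norm g * norm T" unfolding \<phi>_def by (rule norm_blinfun_compose)
      also have "\<dots> \<le> 1" using g nT by (simp add: mult_le_one)
      finally show ?thesis .
    qed
    have \<phi>D: "blinfun_apply \<phi> x1 - blinfun_apply \<phi> x2 = D"
      using g(2) by (simp add: \<phi>_def blinfun.diff_right)
    define h where "h = t *\<^sub>R \<phi>"
    show "D \<le> 2 * \<eta>"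
    proof (cases "h = 0")
      case True
      then have "\<phi> = 0" using t by (simp add: h_def)
      then have "D = 0" using \<phi>D by simp
      then show ?thesis using eta by simp
    next
      case False
      have nh: "norm h \<le> t" using n\<phi> t by (simp add: h_def mult_left_le)
      then have "dist h 0 < d" using t by simp
      from dh[OF False this] have "(norm (u + h) + norm (u - h) - 2) / norm h < \<eta>" .
      moreover have "norm h > 0" using False by simp
      ultimately have "norm (u + h) + norm (u - h) - 2 < \<eta> * norm h"
        by (simp add: divide_less_eq)
      also have "\<eta> * norm h \<le> \<eta> * t" using nh eta by simp
      finally have up: "norm (u + h) + norm (u - h) < 2 + \<eta> * t" by simp
      have a1: "blinfun_apply (u + h) x1 \<le> norm (u + h)" by (rule blinfun_le_norm[OF n1])
      have a2: "blinfun_apply (u - h) x2 \<le> norm (u - h)" by (rule blinfun_le_norm[OF n2])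
      have "blinfun_apply (u + h) x1 + blinfun_apply (u - h) x2
          = blinfun_apply u x1 + blinfun_apply u x2 + t * D"
        using \<phi>D by (simp add: h_def plus_blinfun.rep_eq minus_blinfun.rep_eq scaleR_blinfun.rep_eq algebra_simps)
      then have "2 - 2 * \<delta> + t * D < 2 + \<eta> * t" using a1 a2 up u1 u2 by linarith
      then have "t * D < t * (2 * \<eta>)" unfolding \<delta>_def by (simp add: algebra_simps)
      then show ?thesis using t by simp
    qed
  qed
qed



lemma linear_rank_one: "linear (rank_one u :: 'b::real_normed_vector \<Rightarrow> ('a::real_normed_vector \<Rightarrow>\<^sub>L 'b))"
  by (rule linearI) (auto intro!: blinfun_eqI simp: rank_one_apply plus_blinfun.rep_eq
      scaleR_blinfun.rep_eq scaleR_add_right)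

lemma core_arith:
  fixes a ne c nc N \<beta> \<delta> \<eta> ny :: real
  assumes "N = ne + nc" "ne \<ge> 0" "nc \<ge> 0" "(1 - a) * ne \<le> \<beta> * N" "a < 1 - \<delta>" "\<delta> > 0" "\<beta> \<ge> 0"
    "ny \<ge> 1 - 4*\<beta> - 4*\<eta>" "\<eta> \<ge> 0" "4*\<beta> + 4*\<eta> \<le> 1"
  shows "nc * ny - ne \<ge> (1 - (4*\<beta> + 4*\<eta> + 2*\<beta>/\<delta>)) * N"
proof -
  have "\<delta> * ne \<le> (1 - a) * ne" using assms by (intro mult_right_mono) auto
  then have "\<delta> * ne \<le> \<beta> * N" using assms by linarith
  then have e: "ne \<le> \<beta> * N / \<delta>" using assms by (simp add: field_simps)
  have "nc * ny \<ge> nc * (1 - 4*\<beta> - 4*\<eta>)" using assms by (intro mult_left_mono) auto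
  moreover have "nc * (1 - 4*\<beta> - 4*\<eta>) \<ge> N * (1 - 4*\<beta> - 4*\<eta>) - ne"
  proof -
    have "ne * (1 - 4*\<beta> - 4*\<eta>) \<le> ne" using assms by (simp add: mult_left_le)
    then show ?thesis using assms by (simp add: algebra_simps)
  qed
  moreover have "2 * ne \<le> 2 * \<beta> / \<delta> * N" using e by simp
  ultimately show ?thesis by (simp add: algebra_simps)
qed

theorem mainTheorem12:
  fixes H :: "('a::banach \<Rightarrow>\<^sub>L 'b::banach) set"
  assumes "subspace H" and "closed H"
    and "tensor_dual \<subseteq> H"
    and "octahedral_on H"
    and "\<not> rough TYPE('a \<Rightarrow>\<^sub>L real)"
  shows "octahedral TYPE('b)"
proof -
  have nr: "\<exists>u::'a\<Rightarrow>\<^sub>L real. norm u = 1 \<and> roughness u < ereal e" if "e > 0" for e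
    using assms(5) that unfolding rough_def eps_rough_def by (auto simp: not_le)
  have octH: "\<And>E \<epsilon>. (\<exists>B. finite B \<and> B \<subseteq> H \<and> E = span B) \<Longrightarrow> \<epsilon> > 0 \<Longrightarrow>
        (\<exists>y\<in>H. norm y = 1 \<and> (\<forall>x\<in>E. \<forall>c::real. norm (x + c *\<^sub>R y) \<ge> (1 - \<epsilon>) * (norm x + \<bar>c\<bar>)))"
    using assms(4) unfolding octahedral_on_def by blast
  have tdH: "rank_one f y \<in> H" for f y
    using assms(3) unfolding tensor_dual_def by (auto intro: span_base)
  obtain T1 where T1: "T1 \<in> H" "norm T1 = 1"
  proof -
    have "\<exists>B. finite B \<and> B \<subseteq> H \<and> span {} = span B" by (intro exI[of _ "{}"]) simp
    then show thesis using octH[of "span {}" 1] that by auto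
  qed
  obtain x1 where x1: "blinfun_apply T1 x1 \<noteq> 0"
  proof (rule ccontr)
    assume "\<not> thesis"
    then have "\<And>x. blinfun_apply T1 x = 0" using that by blast
    then have "T1 = 0" by (intro blinfun_eqI) simp
    then show False using T1 by simp
  qed
  define w where "w = blinfun_apply T1 x1 /\<^sub>R norm (blinfun_apply T1 x1)"
  have nw: "norm w = 1" using x1 by (simp add: w_def)
  show ?thesis
    unfolding octahedral_on_def
  proof (intro allI impI, elim conjE exE)
    fix E :: "'b set" and \<epsilon> :: real and B
    assume \<epsilon>: "\<epsilon> > 0" and B: "finite B" "B \<subseteq> UNIV" "E = span B"
    define \<epsilon>' where "\<epsilon>' = min \<epsilon> 1"
    have \<epsilon>': "\<epsilon>' > 0" "\<epsilon>' \<le> 1" "\<epsilon>' \<le> \<epsilon>" using \<epsilon> by (auto simp: \<epsilon>'_def)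
    define \<eta> where "\<eta> = \<epsilon>' / 16"
    have \<eta>: "\<eta> > 0" using \<epsilon>' by (simp add: \<eta>_def)
    obtain u :: "'a \<Rightarrow>\<^sub>L real" where u: "norm u = 1" "roughness u < ereal \<eta>"
      using nr[OF \<eta>] by blast
    obtain \<delta>0 where \<delta>0: "\<delta>0 > 0" and sl0: "\<And>(T::'a \<Rightarrow>\<^sub>L 'b) x1 x2. norm T \<le> 1 \<Longrightarrow> norm x1 \<le> 1 \<Longrightarrow> norm x2 \<le> 1
     \<Longrightarrow> blinfun_apply u x1 \<ge> 1 - \<delta>0 \<Longrightarrow> blinfun_apply u x2 \<ge> 1 - \<delta>0
     \<Longrightarrow> norm (blinfun_apply T x1 - blinfun_apply T x2) \<le> 2 * \<eta>"
      using slice[OF u(2) \<eta>] by blast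
    define \<delta> where "\<delta> = min \<delta>0 1"
    have \<delta>: "\<delta> > 0" "\<delta> \<le> 1" "\<delta> \<le> \<delta>0" using \<delta>0 by (auto simp: \<delta>_def)
    define \<beta> where "\<beta> = \<delta> * \<epsilon>' / 16"
    have \<beta>: "\<beta> > 0" "\<beta> \<le> \<delta> / 16" "2 * \<beta> / \<delta> = \<epsilon>' / 8"
      using \<delta> \<epsilon>' by (auto simp: \<beta>_def mult_left_le)
    define \<rho> where "\<rho> = \<beta> / 3"
    have \<rho>: "\<rho> > 0" using \<beta> by (simp add: \<rho>_def)
    obtain x0 where x0: "norm x0 \<le> 1" "blinfun_apply u x0 > 1 - \<rho>"
      using blinfun_real_approx[OF \<rho>, of u] u by auto
    have ux0le: "blinfun_apply u x0 \<le> 1" using blinfun_le_norm[OF x0(1), of u] u by simp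
    define E' where "E' = span (insert w B)"
    have EE': "E \<subseteq> E'" unfolding E'_def B by (intro span_mono) auto
    have wE': "w \<in> E'" unfolding E'_def by (intro span_base) auto
    define F where "F = rank_one u ` E'"
    have sl: "span (rank_one u ` insert w B) = rank_one u ` span (insert w B)"
      by (rule span_linear_image[OF linear_rank_one])
    have F: "\<exists>B'. finite B' \<and> B' \<subseteq> H \<and> F = span B'"
      apply (rule exI[of _ "rank_one u ` insert w B"])
      using sl B(1) tdH unfolding F_def E'_def by blast
    obtain T where T: "T \<in> H" "norm T = 1"
      and Toct: "\<And>S c. S \<in> F \<Longrightarrow> norm (S + c *\<^sub>R T) \<ge> (1 - \<rho>) * (norm S + \<bar>c\<bar>)"
      using octH[OF F \<rho>] by blast
    define y0 where "y0 = blinfun_apply T x0"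
    have ny0: "norm y0 \<le> 1" using norm_blinfun[of T x0] T x0 by (simp add: y0_def mult_le_one)
    have P1: "\<exists>x. norm x \<le> 1 \<and> blinfun_apply u x \<ge> 0 \<and>
       norm (blinfun_apply u x *\<^sub>R e + c *\<^sub>R blinfun_apply T x) \<ge> (1 - \<beta>) * (norm e + \<bar>c\<bar>)"
      if e: "e \<in> E'" for e c
    proof (cases "norm e + \<bar>c\<bar> = 0")
      case True then show ?thesis by (intro exI[of _ 0]) simp
    next
      case False
      define N where "N = norm e + \<bar>c\<bar>"
      have N: "N > 0" using False norm_ge_zero[of e] abs_ge_zero[of c] unfolding N_def by linarith
      define S where "S = rank_one u e"
      have SF: "S \<in> F" using e by (simp add: F_def S_def)
      have "norm (blinfun_apply S x0) \<le> norm S * norm x0" by (rule norm_blinfun)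
      also have "\<dots> \<le> norm S" using x0 by (simp add: mult_left_le)
      finally have "\<bar>blinfun_apply u x0\<bar> * norm e \<le> norm S" by (simp add: S_def rank_one_apply)
      moreover have "(1 - \<rho>) * norm e \<le> \<bar>blinfun_apply u x0\<bar> * norm e"
        using x0 by (intro mult_right_mono) auto
      ultimately have nS: "(1 - \<rho>) * norm e \<le> norm S" by linarith
      have "(1 - \<rho>) * ((1 - \<rho>) * norm e + \<bar>c\<bar>) \<le> (1 - \<rho>) * (norm S + \<bar>c\<bar>)"
        using nS \<rho> \<beta> \<delta> by (intro mult_left_mono) (auto simp: \<rho>_def)
      also have "\<dots> \<le> norm (S + c *\<^sub>R T)" by (rule Toct[OF SF])
      finally have A: "(1 - \<rho>) * ((1 - \<rho>) * norm e + \<bar>c\<bar>) \<le> norm (S + c *\<^sub>R T)" .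
      have "(1 - 2*\<rho>) * N \<le> (1 - \<rho>) * ((1 - \<rho>) * norm e + \<bar>c\<bar>)"
      proof -
        have "(1 - \<rho>) * ((1 - \<rho>) * norm e + \<bar>c\<bar>) = (1 - 2*\<rho>) * N + \<rho>*\<rho>*norm e + \<rho> * \<bar>c\<bar>"
          by (simp add: N_def algebra_simps power2_eq_square)
        moreover have "\<rho>*\<rho>*norm e \<ge> 0" using \<rho> by simp
        moreover have "\<rho> * \<bar>c\<bar> \<ge> 0" using \<rho> by simp
        ultimately show ?thesis by linarith
      qed
      with A have B1: "(1 - 2*\<rho>) * N \<le> norm (S + c *\<^sub>R T)" by linarith
      obtain x where x: "norm x \<le> 1" "norm (blinfun_apply (S + c *\<^sub>R T) x) > norm (S + c *\<^sub>R T) - \<rho> * N"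
        using blinfun_norm_approx[of "\<rho> * N" "S + c *\<^sub>R T"] \<rho> N by auto
      have app: "blinfun_apply (S + c *\<^sub>R T) x = blinfun_apply u x *\<^sub>R e + c *\<^sub>R blinfun_apply T x" for x
        by (simp add: S_def rank_one_apply plus_blinfun.rep_eq scaleR_blinfun.rep_eq)
      have big: "norm (blinfun_apply u x *\<^sub>R e + c *\<^sub>R blinfun_apply T x) \<ge> (1 - \<beta>) * N"
        using x(2) B1 app[of x] unfolding \<rho>_def by (simp add: algebra_simps)
      show ?thesis
      proof (cases "blinfun_apply u x \<ge> 0")
        case True then show ?thesis using x big by (intro exI[of _ x]) (simp add: N_def)
      next
        case False
        have "blinfun_apply u (-x) *\<^sub>R e + c *\<^sub>R blinfun_apply T (-x)
            = - (blinfun_apply u x *\<^sub>R e + c *\<^sub>R blinfun_apply T x)"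
          by (simp add: blinfun.minus_right algebra_simps)
        then have "norm (blinfun_apply u (-x) *\<^sub>R e + c *\<^sub>R blinfun_apply T (-x))
            = norm (blinfun_apply u x *\<^sub>R e + c *\<^sub>R blinfun_apply T x)" by (metis norm_minus_cancel)
        moreover have "blinfun_apply u (-x) \<ge> 0" "norm (-x) \<le> 1" using False x by (auto simp: blinfun.minus_right)
        ultimately show ?thesis using big unfolding N_def
          by (intro exI[of _ "-x"] conjI) linarith+
      qed
    qed
    have P3: "norm (e + c *\<^sub>R y0) \<ge> (1 - \<beta>) * (norm e + \<bar>c\<bar>) - (1 - a) * norm e - 2 * \<eta> * \<bar>c\<bar>"
      if x: "norm x \<le> 1" "blinfun_apply u x = a" "a \<ge> 1 - \<delta>" "a \<le> 1"
        "norm (a *\<^sub>R e + c *\<^sub>R blinfun_apply T x) \<ge> (1 - \<beta>) * (norm e + \<bar>c\<bar>)" for x a e c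
    proof -
      have d: "norm (blinfun_apply T x - y0) \<le> 2 * \<eta>"
        unfolding y0_def using sl0[of T x x0] x x0 T \<delta> \<rho> \<beta> by (simp add: \<rho>_def)
      have eq: "e + c *\<^sub>R y0 = (a *\<^sub>R e + c *\<^sub>R blinfun_apply T x) + ((1 - a) *\<^sub>R e - c *\<^sub>R (blinfun_apply T x - y0))"
        by (simp add: algebra_simps)
      have "norm (a *\<^sub>R e + c *\<^sub>R blinfun_apply T x) \<le> norm (e + c *\<^sub>R y0) + norm ((1 - a) *\<^sub>R e - c *\<^sub>R (blinfun_apply T x - y0))"
        using norm_triangle_ineq4[of "e + c *\<^sub>R y0" "(1 - a) *\<^sub>R e - c *\<^sub>R (blinfun_apply T x - y0)"] eq
        by (metis add_diff_cancel_right')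
      moreover have "norm ((1 - a) *\<^sub>R e - c *\<^sub>R (blinfun_apply T x - y0)) \<le> (1 - a) * norm e + \<bar>c\<bar> * (2 * \<eta>)"
      proof -
        have "norm ((1 - a) *\<^sub>R e - c *\<^sub>R (blinfun_apply T x - y0)) \<le> norm ((1 - a) *\<^sub>R e) + norm (c *\<^sub>R (blinfun_apply T x - y0))"
          by (rule norm_triangle_ineq4)
        also have "\<dots> = (1 - a) * norm e + \<bar>c\<bar> * norm (blinfun_apply T x - y0)" using x by simp
        also have "\<dots> \<le> (1 - a) * norm e + \<bar>c\<bar> * (2 * \<eta>)" using d by (simp add: mult_left_mono)
        finally show ?thesis .
      qed
      ultimately show ?thesis using x(5) by (simp add: algebra_simps)
    qed
    have P2: "(1 - a) * norm e \<le> \<beta> * (norm e + \<bar>c\<bar>)"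
      if x: "norm x \<le> 1" "blinfun_apply u x = a"
        "norm (a *\<^sub>R e + c *\<^sub>R blinfun_apply T x) \<ge> (1 - \<beta>) * (norm e + \<bar>c\<bar>)" "a \<ge> 0" for x a e c
    proof -
      have "norm (blinfun_apply T x) \<le> 1" using norm_blinfun[of T x] T x by (simp add: mult_le_one)
      then have "norm (c *\<^sub>R blinfun_apply T x) \<le> \<bar>c\<bar>" by (simp add: mult_left_le)
      then have "norm (a *\<^sub>R e + c *\<^sub>R blinfun_apply T x) \<le> a * norm e + \<bar>c\<bar>"
        using norm_triangle_ineq[of "a *\<^sub>R e" "c *\<^sub>R blinfun_apply T x"] x(4) by simp
      then show ?thesis using x(3) by (simp add: algebra_simps)
    qed
    have ale: "blinfun_apply u x \<le> 1" if "norm x \<le> 1" for x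
      using blinfun_le_norm[OF that, of u] u by simp
    have ny0': "norm y0 \<ge> 1 - 4*\<beta> - 4*\<eta>"
    proof -
      obtain x where x: "norm x \<le> 1" "blinfun_apply u x \<ge> 0"
        "norm (blinfun_apply u x *\<^sub>R w + 1 *\<^sub>R blinfun_apply T x) \<ge> (1 - \<beta>) * (norm w + \<bar>1\<bar>)"
        using P1[OF wE', of 1] by blast
      define a where "a = blinfun_apply u x"
      have "(1 - a) * norm w \<le> \<beta> * (norm w + \<bar>1\<bar>)"
        using P2[of x a w 1] x by (simp add: a_def)
      then have "a \<ge> 1 - \<delta>" using nw \<beta> by simp
      then have "norm (w + 1 *\<^sub>R y0) \<ge> (1 - \<beta>) * (norm w + \<bar>1\<bar>) - (1 - a) * norm w - 2 * \<eta> * \<bar>1\<bar>"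
        using P3[of x a w 1] x ale[OF x(1)] by (simp add: a_def)
      moreover have "(1 - a) * norm w \<le> \<beta> * 2" using P2[of x a w 1] x nw by (simp add: a_def)
      moreover have "norm (w + y0) \<le> 1 + norm y0" using norm_triangle_ineq[of w y0] nw by simp
      ultimately show ?thesis using nw \<eta> by simp
    qed
    define \<kappa> where "\<kappa> = 4*\<beta> + 4*\<eta> + 2*\<beta>/\<delta>"
    have b16: "\<beta> \<le> \<epsilon>' / 16" using \<delta> \<epsilon>' by (simp add: \<beta>_def mult_left_le_one_le)
    have \<kappa>: "\<kappa> < \<epsilon>'" "4*\<beta> + 4*\<eta> \<le> 1"
      using b16 \<beta>(3) \<epsilon>' unfolding \<kappa>_def \<eta>_def by linarith+
    have core: "norm (e + c *\<^sub>R y0) \<ge> (1 - \<kappa>) * (norm e + \<bar>c\<bar>)" if e: "e \<in> E'" for e c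
    proof -
      obtain x where x: "norm x \<le> 1" "blinfun_apply u x \<ge> 0"
        "norm (blinfun_apply u x *\<^sub>R e + c *\<^sub>R blinfun_apply T x) \<ge> (1 - \<beta>) * (norm e + \<bar>c\<bar>)"
        using P1[OF e, of c] by blast
      define a where "a = blinfun_apply u x"
      have p2: "(1 - a) * norm e \<le> \<beta> * (norm e + \<bar>c\<bar>)"
        using P2[of x a e c] x by (simp add: a_def)
      show ?thesis
      proof (cases "a \<ge> 1 - \<delta>")
        case True
        have "norm (e + c *\<^sub>R y0) \<ge> (1 - \<beta>) * (norm e + \<bar>c\<bar>) - (1 - a) * norm e - 2 * \<eta> * \<bar>c\<bar>"
          using P3[of x a e c] x True ale[OF x(1)] by (simp add: a_def)
        moreover have "2 * \<eta> * \<bar>c\<bar> \<le> 2 * \<eta> * (norm e + \<bar>c\<bar>)" using \<eta> by simp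
        moreover have "(1 - \<kappa>) * (norm e + \<bar>c\<bar>) \<le> (1 - 2*\<beta> - 2*\<eta>) * (norm e + \<bar>c\<bar>)"
          using \<beta> \<delta> \<eta> \<epsilon>' by (intro mult_right_mono) (auto simp: \<kappa>_def)
        ultimately show ?thesis using p2 by (simp add: algebra_simps)
      next
        case False
        have "\<bar>c\<bar> * norm y0 - norm e \<ge> (1 - \<kappa>) * (norm e + \<bar>c\<bar>)"
          unfolding \<kappa>_def
          by (rule core_arith[of _ "norm e" "\<bar>c\<bar>" a]) (use p2 False \<delta> \<beta> ny0' \<eta> \<kappa> in auto)
        moreover have "\<bar>c\<bar> * norm y0 - norm e \<le> norm (e + c *\<^sub>R y0)"
          using norm_triangle_ineq3[of "c *\<^sub>R y0" "- e"] by (simp add: add.commute)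
        ultimately show ?thesis by linarith
      qed
    qed
    have y0pos: "norm y0 > 0" using ny0' \<kappa> \<beta> \<delta> \<epsilon>' unfolding \<kappa>_def by linarith
    define y where "y = y0 /\<^sub>R norm y0"
    show "\<exists>y\<in>UNIV. norm y = 1 \<and> (\<forall>x\<in>E. \<forall>c::real. norm (x + c *\<^sub>R y) \<ge> (1 - \<epsilon>) * (norm x + \<bar>c\<bar>))"
    proof (intro bexI[of _ y] conjI ballI allI)
      show "norm y = 1" using y0pos by (simp add: y_def)
    next
      fix e c assume "e \<in> E"
      then have e: "e \<in> E'" using EE' by auto
      have "x + c *\<^sub>R y = x + (c / norm y0) *\<^sub>R y0" for x by (simp add: y_def divide_inverse)
      then have "norm (e + c *\<^sub>R y) \<ge> (1 - \<kappa>) * (norm e + \<bar>c / norm y0\<bar>)"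
        using core[OF e, of "c / norm y0"] by presburger
      moreover have "\<bar>c / norm y0\<bar> \<ge> \<bar>c\<bar>" using y0pos ny0
        by (simp add: abs_div le_divide_eq mult_left_le)
      moreover have "1 - \<kappa> \<ge> 0" "1 - \<epsilon> \<le> 1 - \<kappa>" using \<kappa> \<epsilon>' by auto
      ultimately have "norm (e + c *\<^sub>R y) \<ge> (1 - \<kappa>) * (norm e + \<bar>c\<bar>)"
        by (smt (verit) mult_left_mono)
      moreover have "(1 - \<epsilon>) * (norm e + \<bar>c\<bar>) \<le> (1 - \<kappa>) * (norm e + \<bar>c\<bar>)"
        using \<open>1 - \<epsilon> \<le> 1 - \<kappa>\<close> by (intro mult_right_mono) auto
      ultimately show "norm (e + c *\<^sub>R y) \<ge> (1 - \<epsilon>) * (norm e + \<bar>c\<bar>)" by linarith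
    qed simp
  qed
qed

end
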